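(* Let $\Gamma$ be a symmetric, folded, idempotent family of Boolean promise relations such that $\operatorname{AT}_L\notin\operatorname{poly}(\Gamma)$ for some odd positive integer $L$. Then there is a promise relation $(P,Q)$ with $\operatorname{poly}(\Gamma)\subseteq\operatorname{poly}(P,Q)$ of one of the following two forms: either $P=\operatorname{Ham}_k(\{1\})$, $Q=\operatorname{Ham}_k(\{0,1,\dots,k-2,k\})$ for some $k\ge 3$; or $P=\operatorname{Ham}_k(\{0,b\})$, $Q=\operatorname{Ham}_k(\{0,\dots,k-1\})$ for some $k\ge 2$ and $b\in\{1,\dots,k-1\}$.
   Context: Domain $\{0,1\}$. A promise relation is a pair $(P,Q)$ with $P\subseteq Q\subseteq\{0,1\}^k$. $f:\{0,1\}^L\to\{0,1\}$ is a weak polymorphism of $(P,Q)$ if for all $x^{(1)},\dots,x^{(L)}\in P$, $(f(x^{(1)}_1,\dots,x^{(L)}_1),\dots,f(x^{(1)}_k,\dots,x^{(L)}_k))\in Q$; $\operatorname{poly}(\Gamma)$ is the set of functions that are weak polymorphisms of every member of $\Gamma$. $\Gamma$ is symmetric if every relation appearing in it is invariant under coordinate permutations; folded if each $f\in\operatorname{poly}(\Gamma)$ satisfies $f(\bar x)=\neg f(x)$; idempotent if each $f\in\operatorname{poly}(\Gamma)$ satisfies $f(0,\dots,0)=0$, $f(1,\dots,1)=1$. $\operatorname{Ham}_k(S)=\{x\in\{0,1\}^k:|x|\in S\}$ where $|x|$ is the Hamming weight. For odd $L$, $\operatorname{AT}_L(x)=1$ iff $\sum_{i=1}^L(-1)^{i-1}x_i>0$.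 *)

theory Defs
  imports "HOL-Combinatorics.Permutations"
begin

text \<open>Boolean domain {0,1} is represented by bool (False = 0, True = 1).
  A k-tuple is a bool list of length k. An L-ary function is a pair (L, f) with
  L \<ge> 1 and f :: bool list \<Rightarrow> bool (only its values on lists of length L matter).\<close>

type_synonym prel = "nat \<times> bool list set \<times> bool list set"

definition is_prel :: "prel \<Rightarrow> bool" where
  "is_prel R = (case R of (k, P, Q) \<Rightarrow> P \<subseteq> Q \<and> (\<forall>x\<in>Q. length x = k))"

definition weak_poly :: "nat \<Rightarrow> (bool list \<Rightarrow> bool) \<Rightarrow> prel \<Rightarrow> bool" where
  "weak_poly L f R = (case R of (k, P, Q) \<Rightarrow>
     (\<forall>xs. length xs = L \<longrightarrow> set xs \<subseteq> P \<longrightarrow>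
        map (\<lambda>i. f (map (\<lambda>x. x ! i) xs)) [0..<k] \<in> Q))"

definition poly :: "prel set \<Rightarrow> (nat \<times> (bool list \<Rightarrow> bool)) set" where
  "poly \<Gamma> = {(L, f). L \<ge> 1 \<and> (\<forall>R\<in>\<Gamma>. weak_poly L f R)}"

definition symmetric_prel :: "prel \<Rightarrow> bool" where
  "symmetric_prel R = (case R of (k, P, Q) \<Rightarrow>
     (\<forall>\<pi>. \<pi> permutes {..<k} \<longrightarrow>
        (\<forall>x\<in>P. map (\<lambda>i. x ! \<pi> i) [0..<k] \<in> P) \<and>
        (\<forall>x\<in>Q. map (\<lambda>i. x ! \<pi> i) [0..<k] \<in> Q)))"

definition symmetric_fam :: "prel set \<Rightarrow> bool" where
  "symmetric_fam \<Gamma> = (\<forall>R\<in>\<Gamma>. symmetric_prel R)"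

definition folded :: "prel set \<Rightarrow> bool" where
  "folded \<Gamma> = (\<forall>(L, f)\<in>poly \<Gamma>. \<forall>x. length x = L \<longrightarrow> f (map Not x) = (\<not> f x))"

definition idempotent :: "prel set \<Rightarrow> bool" where
  "idempotent \<Gamma> = (\<forall>(L, f)\<in>poly \<Gamma>. f (replicate L False) = False \<and> f (replicate L True) = True)"

definition hweight :: "bool list \<Rightarrow> nat" where
  "hweight x = length (filter id x)"

definition Ham :: "nat \<Rightarrow> nat set \<Rightarrow> bool list set" where
  "Ham k S = {x. length x = k \<and> hweight x \<in> S}"

text \<open>Alternating threshold: AT_L(x) = 1 iff sum_{i=1}^L (-1)^(i-1) x_i > 0
  (0-based index i here, sign (-1)^i).\<close>
definition AT :: "nat \<Rightarrow> bool list \<Rightarrow> bool" where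
  "AT L x = ((\<Sum>i<L. (-1::int) ^ i * (if x ! i then 1 else 0)) > 0)"

end

theory Submission
  imports Defs
begin

lemma hweight_Nil[simp]: "hweight [] = 0" by (simp add: hweight_def)
lemma hweight_Cons[simp]: "hweight (a#x) = (if a then Suc (hweight x) else hweight x)"
  by (simp add: hweight_def)
lemma hweight_append[simp]: "hweight (x @ y) = hweight x + hweight y"
  by (simp add: hweight_def)
lemma hweight_replicate[simp]: "hweight (replicate n b) = (if b then n else 0)"
  by (induction n) auto
lemma hweight_le: "hweight x \<le> length x"
  by (induction x) auto
lemma hweight_map_not: "hweight (map Not x) = length x - hweight x"
  by (induction x) (auto simp: Suc_diff_le hweight_le)

lemma hweight_int: "int (hweight x) = (\<Sum>c<length x. if x!c then 1 else 0)"
proof (induction x)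
  case Nil then show ?case by simp
next
  case (Cons a x)
  have "(\<Sum>c<length (a#x). if (a#x)!c then 1 else 0::int)
      = (if a then 1 else 0) + (\<Sum>c<length x. if x!c then 1 else 0)"
    by (subst length_Cons, subst sum.lessThan_Suc_shift) simp
  then show ?case using Cons by simp
qed

lemma hweight_zero: "hweight x = 0 \<Longrightarrow> c < length x \<Longrightarrow> \<not> x ! c"
  by (simp add: hweight_def filter_empty_conv) (metis nth_mem)

lemma hweight_full: "hweight x = length x \<Longrightarrow> c < length x \<Longrightarrow> x ! c"
  unfolding hweight_def
  by (metis filter_id_conv id_apply length_filter_less less_irrefl nth_mem)

lemma mset_bool_eq:
  fixes x p :: "bool list"
  assumes "length x = length p" "hweight x = hweight p"
  shows "mset x = mset p"
proof (rule multiset_eqI)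
  fix a :: bool
  have t: "count (mset z) True = hweight z" for z :: "bool list"
    by (induction z) auto
  have f: "count (mset z) False = length z - hweight z" for z :: "bool list"
    by (induction z) (auto simp: Suc_diff_le hweight_le)
  show "count (mset x) a = count (mset p) a"
    by (cases a) (use assms t f in auto)
qed

lemma sym_set_ham:
  assumes len: "\<forall>x\<in>A. length x = k"
    and sym: "\<forall>\<pi>. \<pi> permutes {..<k} \<longrightarrow> (\<forall>x\<in>A. map (\<lambda>i. x ! \<pi> i) [0..<k] \<in> A)"
  shows "A = Ham k (hweight ` A)"
proof
  show "A \<subseteq> Ham k (hweight ` A)" using len by (auto simp: Ham_def)
  show "Ham k (hweight ` A) \<subseteq> A"
  proof
    fix x assume "x \<in> Ham k (hweight ` A)"
    then obtain p where p: "p \<in> A" "length x = k" "hweight x = hweight p"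
      by (auto simp: Ham_def)
    have "mset x = mset p" using p len mset_bool_eq by auto
    then obtain \<pi> where "\<pi> permutes {..<length p}" "permute_list \<pi> p = x"
      by (rule mset_eq_permutation)
    then show "x \<in> A" using sym p len by (auto simp: permute_list_def)
  qed
qed


lemma derive_target:
  assumes wp: "weak_poly N f (k, Ham k S, Ham k T)"
    and fold: "\<forall>x. length x = N \<longrightarrow> f (map Not x) = (\<not> f x)"
    and idem0: "f (replicate N False) = False" and idem1: "f (replicate N True) = True"
    and k: "k = k' + i + j"
    and S': "\<forall>s\<in>S'. s \<le> k' \<longrightarrow> (if ng then k - (s+i) else s+i) \<in> S"
    and T': "\<forall>t \<le> k'. (if ng then k - (t+i) else t+i) \<in> T \<longrightarrow> t \<in> T'"
  shows "weak_poly N f (k', Ham k' S', Ham k' T')"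
  unfolding weak_poly_def
proof (simp only: prod.case, intro allI impI)
  fix xs :: "bool list list"
  assume len: "length xs = N" and sub: "set xs \<subseteq> Ham k' S'"
  define \<tau> where "\<tau> x = map (\<lambda>b. b \<noteq> ng) (x @ replicate i True @ replicate j False)" for x
  have hw\<tau>: "hweight (\<tau> x) = (if ng then k - (hweight x + i) else hweight x + i)"
    if "length x = k'" for x
    using that k hweight_le[of x] by (simp add: \<tau>_def hweight_map_not)
  have len\<tau>: "length (\<tau> x) = k" if "length x = k'" for x
    using that k by (simp add: \<tau>_def)
  have "set (map \<tau> xs) \<subseteq> Ham k S"
  proof
    fix z assume "z \<in> set (map \<tau> xs)"
    then obtain x where x: "x \<in> set xs" "z = \<tau> x" by auto
    then have "length x = k'" "hweight x \<in> S'" using sub by (auto simp: Ham_def)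
    moreover have "hweight x \<le> k'" using hweight_le \<open>length x = k'\<close> by metis
    ultimately show "z \<in> Ham k S" using x S' hw\<tau> len\<tau> by (auto simp: Ham_def)
  qed
  then have Y: "map (\<lambda>c. f (map (\<lambda>x. x ! c) (map \<tau> xs))) [0..<k] \<in> Ham k T"
    using wp len unfolding weak_poly_def prod.case
    by (metis length_map)
  define y where "y = map (\<lambda>c. f (map (\<lambda>x. x ! c) xs)) [0..<k']"
  have lenx: "\<forall>x\<in>set xs. length x = k'" using sub by (auto simp: Ham_def)
  have eq: "map (\<lambda>c. f (map (\<lambda>x. x ! c) (map \<tau> xs))) [0..<k] = \<tau> y"
  proof (rule nth_equalityI)
    show "length (map (\<lambda>c. f (map (\<lambda>x. x ! c) (map \<tau> xs))) [0..<k]) = length (\<tau> y)"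
      using k by (simp add: \<tau>_def y_def)
  next
    fix c assume "c < length (map (\<lambda>c. f (map (\<lambda>x. x ! c) (map \<tau> xs))) [0..<k])"
    then have c: "c < k" by simp
    show "map (\<lambda>c. f (map (\<lambda>x. x ! c) (map \<tau> xs))) [0..<k] ! c = \<tau> y ! c"
    proof (cases "c < k'")
      case True
      have "map (\<lambda>x. x ! c) (map \<tau> xs) = map (\<lambda>b. b \<noteq> ng) (map (\<lambda>x. x ! c) xs)"
        using lenx True by (auto simp: \<tau>_def nth_append)
      moreover have "f (map (\<lambda>b. b \<noteq> ng) (map (\<lambda>x. x ! c) xs)) = (f (map (\<lambda>x. x ! c) xs) \<noteq> ng)"
      proof (cases ng)
        case True
        have "map (\<lambda>b. b \<noteq> ng) (map (\<lambda>x. x ! c) xs) = map Not (map (\<lambda>x. x ! c) xs)"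
          using True by simp
        then show ?thesis using fold len True by (metis length_map)
      next
        case False
        then show ?thesis by simp
      qed
      moreover have "\<tau> y ! c = (y ! c \<noteq> ng)" using True by (simp add: \<tau>_def y_def nth_append)
      moreover have "y ! c = f (map (\<lambda>x. x ! c) xs)" using True by (simp add: y_def)
      moreover have "map (\<lambda>c. f (map (\<lambda>x. x ! c) (map \<tau> xs))) [0..<k] ! c
          = f (map (\<lambda>x. x ! c) (map \<tau> xs))" using c by (simp del: map_map)
      ultimately show ?thesis by metis
    next
      case False
      show ?thesis
      proof (cases "c < k' + i")
        case True
        have pad: "\<tau> z ! c = (True \<noteq> ng)" if "length z = k'" for z
          using that True False by (simp add: \<tau>_def nth_append)
        have "map (\<lambda>x. x ! c) (map \<tau> xs) = replicate N (True \<noteq> ng)"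
          using lenx pad len by (simp add: map_replicate_const cong: map_cong)
        moreover have "f (replicate N (True \<noteq> ng)) = (True \<noteq> ng)"
          using idem0 idem1 by (cases ng) simp_all
        moreover have "map (\<lambda>c. f (map (\<lambda>x. x ! c) (map \<tau> xs))) [0..<k] ! c
          = f (map (\<lambda>x. x ! c) (map \<tau> xs))" using c by (simp del: map_map)
        moreover have "\<tau> y ! c = (True \<noteq> ng)" using pad by (simp add: y_def)
        ultimately show ?thesis by metis
      next
        case F2: False
        have pad: "\<tau> z ! c = (False \<noteq> ng)" if "length z = k'" for z
          using that F2 False c k by (simp add: \<tau>_def nth_append)
        have "map (\<lambda>x. x ! c) (map \<tau> xs) = replicate N (False \<noteq> ng)"
          using lenx pad len by (simp add: map_replicate_const cong: map_cong)
        moreover have "f (replicate N (False \<noteq> ng)) = (False \<noteq> ng)"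
          using idem0 idem1 by (cases ng) simp_all
        moreover have "map (\<lambda>c. f (map (\<lambda>x. x ! c) (map \<tau> xs))) [0..<k] ! c
          = f (map (\<lambda>x. x ! c) (map \<tau> xs))" using c by (simp del: map_map)
        moreover have "\<tau> y ! c = (False \<noteq> ng)" using pad by (simp add: y_def)
        ultimately show ?thesis by metis
      qed
    qed
  qed
  have ly: "length y = k'" by (simp add: y_def)
  have "hweight (\<tau> y) \<in> T" using Y eq by (simp add: Ham_def)
  then have "hweight y \<in> T'" using T' hw\<tau>[OF ly] hweight_le[of y] ly by auto
  then show "map (\<lambda>i. f (map (\<lambda>x. x ! i) xs)) [0..<k'] \<in> Ham k' T'"
    using ly by (simp add: Ham_def y_def)
qed


lemma alt_odd: "odd L \<Longrightarrow> (\<Sum>j<L. (-1::int)^j) = 1"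
proof -
  assume "odd L"
  then obtain m where L: "L = 2*m+1" by (metis oddE)
  have "(\<Sum>j<2*m+1. (-1::int)^j) = 1"
    by (induction m) (simp_all add: sum.lessThan_Suc)
  then show ?thesis using L by simp
qed

lemma alt_swap:
  assumes "\<forall>x\<in>set xs. length x = k"
  shows "(\<Sum>c<k. \<Sum>j<length xs. (-1::int)^j * (if xs!j!c then 1 else 0))
       = (\<Sum>j<length xs. (-1)^j * int (hweight (xs!j)))"
proof -
  have "(\<Sum>c<k. \<Sum>j<length xs. (-1::int)^j * (if xs!j!c then 1 else 0))
      = (\<Sum>j<length xs. \<Sum>c<k. (-1::int)^j * (if xs!j!c then 1 else 0))"
    by (rule sum.swap)
  also have "\<dots> = (\<Sum>j<length xs. (-1)^j * int (hweight (xs!j)))"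
  proof (rule sum.cong[OF refl])
    fix j assume "j \<in> {..<length xs}"
    then have "length (xs!j) = k" using assms by auto
    then show "(\<Sum>c<k. (-1::int)^j * (if xs!j!c then 1 else 0)) = (-1)^j * int (hweight (xs!j))"
      by (simp add: hweight_int sum_distrib_left)
  qed
  finally show ?thesis .
qed

lemma AT_col: "length xs = L \<Longrightarrow>
  AT L (map (\<lambda>x. x!c) xs) = ((\<Sum>j<length xs. (-1::int)^j * (if xs!j!c then 1 else 0)) > 0)"
proof -
  assume l: "length xs = L"
  have "(\<Sum>i<L. (-1::int)^i * (if (map (\<lambda>x. x!c) xs)!i then 1 else 0))
      = (\<Sum>j<length xs. (-1::int)^j * (if xs!j!c then 1 else 0))"
    using l by (intro sum.cong) auto
  then show ?thesis by (simp add: AT_def)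
qed

lemma AT_fail_cases:
  assumes oddL: "odd L" and lxs: "length xs = L"
    and rows: "\<forall>x\<in>set xs. length x = k \<and> hweight x \<in> S"
    and ST: "S \<subseteq> T"
    and yd: "y = map (\<lambda>c. AT L (map (\<lambda>x. x!c) xs)) [0..<k]"
    and tT: "hweight y \<notin> T"
  shows "(\<exists>s\<in>S. \<exists>s'\<in>S. s < s' \<and> s' < hweight y \<and> hweight y \<le> k)
       \<or> (\<exists>s\<in>S. \<exists>s'\<in>S. s < s' \<and> hweight y < s \<and> s' \<le> k)
       \<or> (\<exists>s\<in>S. 1 \<le> s \<and> s < hweight y \<and> hweight y \<le> k-1)
       \<or> (\<exists>s\<in>S. 1 \<le> hweight y \<and> hweight y < s \<and> s \<le> k-1)"
proof (rule ccontr)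
  assume neg: "\<not> ?thesis"
  define t where "t = hweight y"
  have tT': "\<forall>u\<in>T. u \<noteq> hweight y" using tT by auto
  have ly: "length y = k" using yd by simp
  have tk: "t \<le> k" using hweight_le[of y] ly t_def by simp
  have ne: "xs \<noteq> []" using lxs oddL by auto
  have sk: "hweight x \<le> k" if "x \<in> set xs" for x using rows that hweight_le by metis
  have tW: "hweight x \<noteq> t" if "x \<in> set xs" for x using rows that ST tT t_def by auto
  have yc: "y ! c = ((\<Sum>j<length xs. (-1::int)^j * (if xs!j!c then 1 else 0)) > 0)" if "c < k" for c
    using that yd AT_col[OF lxs] by simp
  define s0 where "s0 = hweight (xs!0)"
  have x0: "xs!0 \<in> set xs" using ne by simp
  have sumeq: "(\<Sum>c<k. \<Sum>j<length xs. (-1::int)^j * (if xs!j!c then 1 else 0)) = int s0"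
    if allq: "\<forall>x\<in>set xs. hweight x = s0"
  proof -
    have "(\<Sum>c<k. \<Sum>j<length xs. (-1::int)^j * (if xs!j!c then 1 else 0))
        = (\<Sum>j<length xs. (-1)^j * int (hweight (xs!j)))"
      using alt_swap rows by blast
    also have "\<dots> = (\<Sum>j<length xs. (-1)^j * int s0)"
      using allq by (auto intro!: sum.cong)
    also have "\<dots> = int s0" using alt_odd[OF oddL] lxs by (simp add: sum_distrib_right[symmetric])
    finally show ?thesis .
  qed
  show False
  proof (cases "t = 0")
    case True
    have allq: "\<forall>x\<in>set xs. hweight x = s0"
    proof
      fix x assume x: "x \<in> set xs"
      have "hweight x > t" "hweight (xs!0) > t" using tW x x0 True by auto
      moreover have "hweight x \<in> S" "hweight (xs!0) \<in> S" using rows x x0 by auto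
      moreover have "hweight x \<le> k" "hweight (xs!0) \<le> k" using sk x x0 by auto
      ultimately have "\<not> hweight x < hweight (xs!0)" "\<not> hweight (xs!0) < hweight x"
        using neg t_def by blast+
      then show "hweight x = s0" unfolding s0_def by simp
    qed
    have "\<not> y ! c" if "c < k" for c using hweight_zero True t_def ly that by metis
    then have "(\<Sum>j<length xs. (-1::int)^j * (if xs!j!c then 1 else 0)) \<le> 0" if "c < k" for c
      using yc that by fastforce
    then have "(\<Sum>c<k. \<Sum>j<length xs. (-1::int)^j * (if xs!j!c then 1 else 0)) \<le> 0"
      by (rule sum_nonpos) (metis lessThan_iff)
    moreover have "s0 > 0" using tW x0 True s0_def by auto
    ultimately show False using sumeq[OF allq] by simp
  next
    case tpos: False
    show False
    proof (cases "t = k")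
      case True
      have allq: "\<forall>x\<in>set xs. hweight x = s0"
      proof
        fix x assume x: "x \<in> set xs"
        have "hweight x < t" "hweight (xs!0) < t" using tW x x0 True sk by (auto simp: le_less)
        moreover have "hweight x \<in> S" "hweight (xs!0) \<in> S" using rows x x0 by auto
        ultimately have "\<not> hweight x < hweight (xs!0)" "\<not> hweight (xs!0) < hweight x"
          using neg t_def True by blast+
        then show "hweight x = s0" unfolding s0_def by simp
      qed
      have "y ! c" if "c < k" for c using hweight_full True t_def ly that by metis
      then have "(\<Sum>j<length xs. (-1::int)^j * (if xs!j!c then 1 else 0)) \<ge> 1" if "c < k" for c
        using yc that by fastforce
      then have "(\<Sum>c<k. \<Sum>j<length xs. (-1::int)^j * (if xs!j!c then 1 else 0)) \<ge> (\<Sum>c<k. 1)"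
        by (intro sum_mono) simp
      moreover have "s0 < k" using tW x0 True s0_def sk by (auto simp: le_less)
      ultimately show False using sumeq[OF allq] by simp
    next
      case tk': False
      have W: "hweight x = 0 \<or> hweight x = k" if x: "x \<in> set xs" for x
      proof -
        have "hweight x \<in> S" using rows x by auto
        moreover have "hweight x \<noteq> t" using tW x by auto
        moreover have "hweight x \<le> k" using sk x by auto
        moreover have "\<not> (1 \<le> hweight x \<and> hweight x < t \<and> t \<le> k-1)"
          using neg t_def \<open>hweight x \<in> S\<close> by blast
        moreover have "\<not> (1 \<le> t \<and> t < hweight x \<and> hweight x \<le> k-1)"
          using neg t_def \<open>hweight x \<in> S\<close> by blast
        ultimately show ?thesis using tpos tk' tk by linarith
      qed
      have kpos: "k > 0" using tpos tk by auto
      have col: "x ! c = x ! 0" if x: "x \<in> set xs" and c: "c < k" for x c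
        using W[OF x] hweight_zero[of x] hweight_full[of x] rows x c kpos by auto
      have "y = replicate k (y!0)"
      proof (rule nth_equalityI)
        show "length y = length (replicate k (y!0))" using ly by simp
      next
        fix c assume "c < length y"
        then have c: "c < k" using ly by simp
        have "xs!j!c = xs!j!0" if "j < length xs" for j using col[OF nth_mem[OF that] c] .
        then have "(\<Sum>j<length xs. (-1::int)^j * (if xs!j!c then 1 else 0))
           = (\<Sum>j<length xs. (-1::int)^j * (if xs!j!0 then 1 else 0))"
          by (intro sum.cong) auto
        then show "y ! c = replicate k (y!0) ! c" using yc[OF c] yc[OF kpos] c
          by simp
      qed
      then have "t = 0 \<or> t = k" using t_def by (metis hweight_replicate)
      then show False using tpos tk' by simp
    qed
  qed
qed


theorem lemma4p4:
  fixes \<Gamma> :: "prel set" and L :: nat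
  assumes "\<forall>R\<in>\<Gamma>. is_prel R"
    and "symmetric_fam \<Gamma>" and "folded \<Gamma>" and "idempotent \<Gamma>"
    and "odd L" and "(L, AT L) \<notin> poly \<Gamma>"
  shows "\<exists>k P Q. poly \<Gamma> \<subseteq> poly {(k, P, Q)} \<and>
           ((k \<ge> 3 \<and> P = Ham k {1} \<and> Q = Ham k ({0..k-2} \<union> {k})) \<or>
            (\<exists>b\<in>{1..k-1}. k \<ge> 2 \<and> P = Ham k {0, b} \<and> Q = Ham k {0..k-1}))"
proof -
  have L1: "L \<ge> 1" using assms(5) by (cases L) auto
  obtain R where R: "R \<in> \<Gamma>" "\<not> weak_poly L (AT L) R"
    using assms(6) L1 by (auto simp: poly_def)
  obtain k P Q where kPQ: "R = (k, P, Q)" by (metis prod.exhaust)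
  obtain xs where xs: "length xs = L" "set xs \<subseteq> P"
    and ynot: "map (\<lambda>i. AT L (map (\<lambda>x. x ! i) xs)) [0..<k] \<notin> Q"
    using R(2) kPQ unfolding weak_poly_def by auto
  have prel: "P \<subseteq> Q" "\<forall>x\<in>Q. length x = k"
    using assms(1) R(1) kPQ by (auto simp: is_prel_def)
  have sy: "symmetric_prel (k,P,Q)" using assms(2) R(1) kPQ by (auto simp: symmetric_fam_def)
  have Peq: "P = Ham k (hweight ` P)"
    by (rule sym_set_ham) (use prel sy in \<open>auto simp: symmetric_prel_def\<close>)
  have Qeq: "Q = Ham k (hweight ` Q)"
    by (rule sym_set_ham) (use prel sy in \<open>auto simp: symmetric_prel_def\<close>)
  define S where "S = hweight ` P"
  define T where "T = hweight ` Q"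
  define y where "y = map (\<lambda>i. AT L (map (\<lambda>x. x ! i) xs)) [0..<k]"
  have ST: "S \<subseteq> T" using prel by (auto simp: S_def T_def)
  have rows: "\<forall>x\<in>set xs. length x = k \<and> hweight x \<in> S"
    using xs prel by (auto simp: S_def)
  have "y \<notin> Ham k T" using ynot Qeq unfolding T_def y_def by metis
  then have tT: "hweight y \<notin> T" by (simp add: Ham_def y_def)
  have polyR: "weak_poly N f (k, Ham k S, Ham k T)"
    and fold: "\<forall>x. length x = N \<longrightarrow> f (map Not x) = (\<not> f x)"
    and idem0: "f (replicate N False) = False" and idem1: "f (replicate N True) = True"
    if "(N, f) \<in> poly \<Gamma>" for N f
  proof -
    show "weak_poly N f (k, Ham k S, Ham k T)"
      using that R(1) kPQ Peq Qeq S_def T_def by (auto simp: poly_def)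
    show "\<forall>x. length x = N \<longrightarrow> f (map Not x) = (\<not> f x)"
      using that assms(3) unfolding folded_def by fast
    show "f (replicate N False) = False" "f (replicate N True) = True"
      using that assms(4) unfolding idempotent_def by fast+
  qed
  have sub: "poly \<Gamma> \<subseteq> poly {R'}" if "\<And>N f. (N, f) \<in> poly \<Gamma> \<Longrightarrow> weak_poly N f R'" for R'
    using that by (auto simp: poly_def)
  define t where "t = hweight y"
  have tT': "\<forall>u\<in>T. u \<noteq> hweight y" using tT by auto
  from AT_fail_cases[OF assms(5) xs(1) rows ST y_def tT]
  consider (A) s s' where "s\<in>S" "s'\<in>S" "s < s'" "s' < t" "t \<le> k"
    | (B) s s' where "s\<in>S" "s'\<in>S" "s < s'" "t < s" "s' \<le> k"
    | (C) s where "s\<in>S" "1 \<le> s" "s < t" "t \<le> k-1"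
    | (D) s where "s\<in>S" "1 \<le> t" "t < s" "s \<le> k-1"
    unfolding t_def by blast
  then show ?thesis
  proof cases
    case A
    define k' where "k' = t - s"
    define b where "b = s' - s"
    have "poly \<Gamma> \<subseteq> poly {(k', Ham k' {0, b}, Ham k' {0..k'-1})}"
    proof (rule sub)
      fix N f assume Nf: "(N, f) \<in> poly \<Gamma>"
      show "weak_poly N f (k', Ham k' {0, b}, Ham k' {0..k'-1})"
        by (rule derive_target[OF polyR[OF Nf] fold[OF Nf] idem0[OF Nf] idem1[OF Nf],
              where i=s and j="k-t" and ng=False])
           (use A tT tT' in \<open>auto simp: k'_def b_def t_def\<close>)
    qed
    moreover have "b \<in> {1..k'-1}" "k' \<ge> 2" using A by (auto simp: k'_def b_def)
    ultimately show ?thesis by blast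
  next
    case B
    define k' where "k' = s' - t"
    define b where "b = s' - s"
    have "poly \<Gamma> \<subseteq> poly {(k', Ham k' {0, b}, Ham k' {0..k'-1})}"
    proof (rule sub)
      fix N f assume Nf: "(N, f) \<in> poly \<Gamma>"
      show "weak_poly N f (k', Ham k' {0, b}, Ham k' {0..k'-1})"
        by (rule derive_target[OF polyR[OF Nf] fold[OF Nf] idem0[OF Nf] idem1[OF Nf],
              where i="k-s'" and j=t and ng=True])
           (use B tT tT' in \<open>auto simp: k'_def b_def t_def\<close>)
    qed
    moreover have "b \<in> {1..k'-1}" "k' \<ge> 2" using B by (auto simp: k'_def b_def)
    ultimately show ?thesis by blast
  next
    case C
    define k' where "k' = t - s + 2"
    have "poly \<Gamma> \<subseteq> poly {(k', Ham k' {1}, Ham k' ({0..k'-2} \<union> {k'}))}"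
    proof (rule sub)
      fix N f assume Nf: "(N, f) \<in> poly \<Gamma>"
      show "weak_poly N f (k', Ham k' {1}, Ham k' ({0..k'-2} \<union> {k'}))"
        by (rule derive_target[OF polyR[OF Nf] fold[OF Nf] idem0[OF Nf] idem1[OF Nf],
              where i="s-1" and j="k-t-1" and ng=False])
           (use C tT tT' in \<open>auto simp: k'_def t_def\<close>)
    qed
    moreover have "k' \<ge> 3" using C by (auto simp: k'_def)
    ultimately show ?thesis by blast
  next
    case D
    define k' where "k' = s - t + 2"
    have "poly \<Gamma> \<subseteq> poly {(k', Ham k' {1}, Ham k' ({0..k'-2} \<union> {k'}))}"
    proof (rule sub)
      fix N f assume Nf: "(N, f) \<in> poly \<Gamma>"
      show "weak_poly N f (k', Ham k' {1}, Ham k' ({0..k'-2} \<union> {k'}))"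
        by (rule derive_target[OF polyR[OF Nf] fold[OF Nf] idem0[OF Nf] idem1[OF Nf],
              where i="k-1-s" and j="t-1" and ng=True])
           (use D tT tT' in \<open>auto simp: k'_def t_def\<close>)
    qed
    moreover have "k' \<ge> 3" using D by (auto simp: k'_def)
    ultimately show ?thesis by blast
  qed
qed

end
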